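(* Let $d \geq 2$ and $n_1,\dots,n_d \geq 1$ be integers, and let $G_1$ and $G_2$ be graphs with non-empty vertex sets and maximum degrees $\Delta_1$ and $\Delta_2$ respectively. Then $K_{n_1,\dots,n_d}$ is isomorphic to a subgraph of $G_1 \square G_2$ if and only if at least one of the following holds: (i) $K_{n_1,\dots,n_d}$ is isomorphic to a subgraph of $G_1$ or of $G_2$; (ii) $d=2$, $(n_1,n_2)=(2,2)$, and both $G_1$ and $G_2$ contain at least one edge; (iii) $d=2$, $\{n_1,n_2\}=\{1,s\}$ for some integer $s\geq 1$, and $\Delta_1+\Delta_2 \geq s$.
   Context: The cartesian product $G_1 \square G_2$ has vertex set $V(G_1)\times V(G_2)$, with $(a,v)(b,u)$ an edge iff either $ab\in E(G_1)$ and $u=v$, or $uv\in E(G_2)$ and $a=b$. $K_{n_1,\dots,n_d}$ denotes the complete $d$-partite graph with parts of sizes $n_1,\dots,n_d$. *)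

theory Defs
  imports Main
begin

definition graph :: "'a set \<Rightarrow> ('a \<Rightarrow> 'a \<Rightarrow> bool) \<Rightarrow> bool" where
  "graph V E \<longleftrightarrow> finite V \<and> (\<forall>x y. E x y \<longrightarrow> x \<in> V \<and> y \<in> V)
     \<and> (\<forall>x y. E x y \<longrightarrow> E y x) \<and> (\<forall>x. \<not> E x x)"

definition degree :: "'a set \<Rightarrow> ('a \<Rightarrow> 'a \<Rightarrow> bool) \<Rightarrow> 'a \<Rightarrow> nat" where
  "degree V E v = card {u \<in> V. E v u}"

definition max_degree :: "'a set \<Rightarrow> ('a \<Rightarrow> 'a \<Rightarrow> bool) \<Rightarrow> nat" where
  "max_degree V E = Max (degree V E ` V)"

definition has_edge :: "'a set \<Rightarrow> ('a \<Rightarrow> 'a \<Rightarrow> bool) \<Rightarrow> bool" where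
  "has_edge V E \<longleftrightarrow> (\<exists>x\<in>V. \<exists>y\<in>V. E x y)"

definition subgraph_iso ::
  "'a set \<Rightarrow> ('a \<Rightarrow> 'a \<Rightarrow> bool) \<Rightarrow> 'b set \<Rightarrow> ('b \<Rightarrow> 'b \<Rightarrow> bool) \<Rightarrow> bool" where
  "subgraph_iso VH EH VG EG \<longleftrightarrow> (\<exists>f. inj_on f VH \<and> f ` VH \<subseteq> VG \<and>
     (\<forall>x\<in>VH. \<forall>y\<in>VH. EH x y \<longrightarrow> EG (f x) (f y)))"

definition cart_V :: "'a set \<Rightarrow> 'b set \<Rightarrow> ('a \<times> 'b) set" where
  "cart_V V1 V2 = V1 \<times> V2"

definition cart_E :: "'a set \<Rightarrow> ('a \<Rightarrow> 'a \<Rightarrow> bool) \<Rightarrow> 'b set \<Rightarrow> ('b \<Rightarrow> 'b \<Rightarrow> bool)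
    \<Rightarrow> ('a \<times> 'b) \<Rightarrow> ('a \<times> 'b) \<Rightarrow> bool" where
  "cart_E V1 E1 V2 E2 p q \<longleftrightarrow> p \<in> V1 \<times> V2 \<and> q \<in> V1 \<times> V2 \<and>
     ((E1 (fst p) (fst q) \<and> snd p = snd q) \<or> (E2 (snd p) (snd q) \<and> fst p = fst q))"

text \<open>Complete d-partite graph K_{n 0, ..., n (d-1)}: vertex (i,j) is the j-th vertex of part i.\<close>
definition Kmp_V :: "nat \<Rightarrow> (nat \<Rightarrow> nat) \<Rightarrow> (nat \<times> nat) set" where
  "Kmp_V d n = {(i, j). i < d \<and> j < n i}"

definition Kmp_E :: "nat \<Rightarrow> (nat \<Rightarrow> nat) \<Rightarrow> (nat \<times> nat) \<Rightarrow> (nat \<times> nat) \<Rightarrow> bool" where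
  "Kmp_E d n p q \<longleftrightarrow> p \<in> Kmp_V d n \<and> q \<in> Kmp_V d n \<and> fst p \<noteq> fst q"

end

theory Submission
  imports Defs
begin


lemma graphD: assumes "graph V E"
  shows "finite V" "E x y \<Longrightarrow> x \<in> V" "E x y \<Longrightarrow> y \<in> V" "E x y \<Longrightarrow> E y x" "\<not> E x x"
  using assms unfolding graph_def by auto

lemma cartE_cases:
  assumes "graph V1 E1" "graph V2 E2" "cart_E V1 E1 V2 E2 p q"
  shows "(snd p = snd q \<and> fst p \<noteq> fst q) \<or> (fst p = fst q \<and> snd p \<noteq> snd q)"
  using assms graphD(5)[OF assms(1)] graphD(5)[OF assms(2)] unfolding cart_E_def by metis

lemma cartE_sym:
  assumes "graph V1 E1" "graph V2 E2" "cart_E V1 E1 V2 E2 p q"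
  shows "cart_E V1 E1 V2 E2 q p"
  using assms unfolding cart_E_def graph_def by auto

lemma T_snd:
  assumes "graph V1 E1" "graph V2 E2" "P \<noteq> Q" "snd P = snd Q"
    "cart_E V1 E1 V2 E2 R P" "cart_E V1 E1 V2 E2 R Q"
  shows "snd R = snd P"
  using cartE_cases[OF assms(1,2,5)] cartE_cases[OF assms(1,2,6)] assms(3,4)
  by (auto simp: prod_eq_iff)

lemma T_fst:
  assumes "graph V1 E1" "graph V2 E2" "P \<noteq> Q" "fst P = fst Q"
    "cart_E V1 E1 V2 E2 R P" "cart_E V1 E1 V2 E2 R Q"
  shows "fst R = fst P"
  using cartE_cases[OF assms(1,2,5)] cartE_cases[OF assms(1,2,6)] assms(3,4)
  by (auto simp: prod_eq_iff)

lemma D_lem: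
  assumes "graph V1 E1" "graph V2 E2" "fst P \<noteq> fst Q" "snd P \<noteq> snd Q"
    "cart_E V1 E1 V2 E2 R P" "cart_E V1 E1 V2 E2 R Q"
  shows "R = (fst P, snd Q) \<or> R = (fst Q, snd P)"
  using cartE_cases[OF assms(1,2,5)] cartE_cases[OF assms(1,2,6)] assms(3,4)
  by (auto simp: prod_eq_iff)

lemma fiber_snd:
  assumes "graph V1 E1" "graph V2 E2"
    and f: "inj_on f VH" "f ` VH \<subseteq> cart_V V1 V2"
       "\<forall>x\<in>VH. \<forall>y\<in>VH. EH x y \<longrightarrow> cart_E V1 E1 V2 E2 (f x) (f y)"
    and v: "\<forall>x\<in>VH. snd (f x) = v"
  shows "subgraph_iso VH EH V1 E1"
  unfolding subgraph_iso_def
proof (intro exI[of _ "fst \<circ> f"] conjI)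
  show "inj_on (fst \<circ> f) VH"
    using f(1) v unfolding inj_on_def by (simp add: prod_eq_iff)
  show "(fst \<circ> f) ` VH \<subseteq> V1" using f(2) by (auto simp: cart_V_def)
  show "\<forall>x\<in>VH. \<forall>y\<in>VH. EH x y \<longrightarrow> E1 ((fst \<circ> f) x) ((fst \<circ> f) y)"
    using f(3) v graphD(5)[OF assms(2)] unfolding cart_E_def by fastforce
qed

lemma fiber_fst:
  assumes "graph V1 E1" "graph V2 E2"
    and f: "inj_on f VH" "f ` VH \<subseteq> cart_V V1 V2"
       "\<forall>x\<in>VH. \<forall>y\<in>VH. EH x y \<longrightarrow> cart_E V1 E1 V2 E2 (f x) (f y)"
    and v: "\<forall>x\<in>VH. fst (f x) = v"
  shows "subgraph_iso VH EH V2 E2"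
  unfolding subgraph_iso_def
proof (intro exI[of _ "snd \<circ> f"] conjI)
  show "inj_on (snd \<circ> f) VH"
    using f(1) v unfolding inj_on_def by (simp add: prod_eq_iff)
  show "(snd \<circ> f) ` VH \<subseteq> V2" using f(2) by (auto simp: cart_V_def)
  show "\<forall>x\<in>VH. \<forall>y\<in>VH. EH x y \<longrightarrow> E2 ((snd \<circ> f) x) ((snd \<circ> f) y)"
    using f(3) v graphD(5)[OF assms(1)] unfolding cart_E_def by fastforce
qed

lemma emb_adj:
  assumes "\<forall>x\<in>Kmp_V d n. \<forall>y\<in>Kmp_V d n. Kmp_E d n x y \<longrightarrow> cart_E V1 E1 V2 E2 (f x) (f y)"
    "i<d" "j<n i" "i'<d" "j'<n i'" "i\<noteq>i'"
  shows "cart_E V1 E1 V2 E2 (f(i,j)) (f(i',j'))"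
  using assms by (auto simp: Kmp_V_def Kmp_E_def)

lemma emb_inj:
  assumes "inj_on f (Kmp_V d n)"
    "i<d" "j<n i" "i'<d" "j'<n i'" "f(i,j) = f(i',j')"
  shows "i = i' \<and> j = j'"
  using assms unfolding inj_on_def Kmp_V_def by blast



lemma noedge2:
  assumes g: "graph V1 E1" "graph V2 E2" and ne: "\<not> has_edge V2 E2"
    and d: "d \<ge> 2" and n: "n 0 \<ge> 1" "n 1 \<ge> 1"
    and e: "\<forall>x\<in>Kmp_V d n. \<forall>y\<in>Kmp_V d n. Kmp_E d n x y \<longrightarrow> cart_E V1 E1 V2 E2 (f x) (f y)"
  shows "\<forall>x\<in>Kmp_V d n. snd (f x) = snd (f(0,0))"
proof
  have es: "snd p = snd q" if "cart_E V1 E1 V2 E2 p q" for p q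
    using that ne unfolding cart_E_def has_edge_def by (auto simp: mem_Times_iff)
  fix x assume "x \<in> Kmp_V d n"
  then obtain i j where x: "x = (i,j)" "i<d" "j<n i" by (auto simp: Kmp_V_def)
  show "snd (f x) = snd (f(0,0))"
  proof (cases "i = 0")
    case True
    have "snd (f(i,j)) = snd (f(1,0))" using es emb_adj[OF e x(2,3), of 1 0] d n True by auto
    also have "\<dots> = snd (f(0,0))" using es emb_adj[OF e, of 1 0 0 0] d n by auto
    finally show ?thesis using x by simp
  next
    case False
    show ?thesis using es emb_adj[OF e x(2,3), of 0 0] d n False x by auto
  qed
qed

lemma noedge1:
  assumes g: "graph V1 E1" "graph V2 E2" and ne: "\<not> has_edge V1 E1"
    and d: "d \<ge> 2" and n: "n 0 \<ge> 1" "n 1 \<ge> 1"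
    and e: "\<forall>x\<in>Kmp_V d n. \<forall>y\<in>Kmp_V d n. Kmp_E d n x y \<longrightarrow> cart_E V1 E1 V2 E2 (f x) (f y)"
  shows "\<forall>x\<in>Kmp_V d n. fst (f x) = fst (f(0,0))"
proof
  have es: "fst p = fst q" if "cart_E V1 E1 V2 E2 p q" for p q
    using that ne unfolding cart_E_def has_edge_def by (auto simp: mem_Times_iff)
  fix x assume "x \<in> Kmp_V d n"
  then obtain i j where x: "x = (i,j)" "i<d" "j<n i" by (auto simp: Kmp_V_def)
  show "fst (f x) = fst (f(0,0))"
  proof (cases "i = 0")
    case True
    have "fst (f(i,j)) = fst (f(1,0))" using es emb_adj[OF e x(2,3), of 1 0] d n True by auto
    also have "\<dots> = fst (f(0,0))" using es emb_adj[OF e, of 1 0 0 0] d n by auto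
    finally show ?thesis using x by simp
  next
    case False
    show ?thesis using es emb_adj[OF e x(2,3), of 0 0] d n False x by auto
  qed
qed

lemma three_parts:
  assumes g: "graph V1 E1" "graph V2 E2"
    and d: "d \<ge> 3" and n: "\<forall>i<d. n i \<ge> 1"
    and inj: "inj_on f (Kmp_V d n)"
    and e: "\<forall>x\<in>Kmp_V d n. \<forall>y\<in>Kmp_V d n. Kmp_E d n x y \<longrightarrow> cart_E V1 E1 V2 E2 (f x) (f y)"
  shows "(\<exists>v. \<forall>x\<in>Kmp_V d n. snd (f x) = v) \<or> (\<exists>u. \<forall>x\<in>Kmp_V d n. fst (f x) = u)"
proof -
  have n0: "0 < n 0" "0 < n 1" "0 < n 2" and dd: "0 < d" "1 < d" "2 < d"
    using n[rule_format, of 0] n[rule_format, of 1] n[rule_format, of 2] d by auto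
  define A B C where "A = f(0,0)" and "B = f(1,0)" and "C = f(2,0)"
  have adj: "\<And>i j i' j'. i<d \<Longrightarrow> j<n i \<Longrightarrow> i'<d \<Longrightarrow> j'<n i' \<Longrightarrow> i\<noteq>i' \<Longrightarrow>
     cart_E V1 E1 V2 E2 (f(i,j)) (f(i',j'))" using emb_adj[OF e] by blast
  have AB: "cart_E V1 E1 V2 E2 A B" "cart_E V1 E1 V2 E2 C A" "cart_E V1 E1 V2 E2 C B"
    using adj[of 0 0 1 0] adj[of 2 0 0 0] adj[of 2 0 1 0] n0 dd by (simp_all add: A_def B_def C_def)
  have ne: "A \<noteq> B" "A \<noteq> C" "B \<noteq> C"
    using emb_inj[OF inj, of 0 0 1 0] emb_inj[OF inj, of 0 0 2 0] emb_inj[OF inj, of 1 0 2 0] n0 dd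
    unfolding A_def B_def C_def by auto
  have part: "\<And>x. x \<in> Kmp_V d n \<Longrightarrow> \<exists>i j. x = (i,j) \<and> i < d \<and> j < n i"
    by (auto simp: Kmp_V_def)
  from cartE_cases[OF g AB(1)]
  have "snd A = snd B \<or> fst A = fst B" by blast
  then show ?thesis
  proof
    assume sAB: "snd A = snd B"
    have sC: "snd C = snd A" using T_snd[OF g ne(1) sAB AB(2) AB(3)] .
    have "\<forall>x\<in>Kmp_V d n. snd (f x) = snd A"
    proof
      fix x assume "x \<in> Kmp_V d n"
      then obtain i j where x: "x = (i,j)" "i<d" "j<n i" using part by blast
      consider "i = 0" | "i = 1" | "i \<noteq> 0 \<and> i \<noteq> 1" by blast
      then show "snd (f x) = snd A"
      proof cases
        case 1
        have "snd (f x) = snd B"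
          by (rule T_snd[OF g ne(3)]) (use sAB sC adj[of i j 1 0] adj[of i j 2 0] x n0 dd 1 in \<open>auto simp: B_def C_def\<close>)
        then show ?thesis using sAB by simp
      next
        case 2
        show ?thesis
          by (rule T_snd[OF g ne(2)]) (use sAB sC adj[of i j 0 0] adj[of i j 2 0] x n0 dd 2 in \<open>auto simp: A_def C_def\<close>)
      next
        case 3
        show ?thesis
          by (rule T_snd[OF g ne(1)]) (use sAB sC adj[of i j 0 0] adj[of i j 1 0] x n0 dd 3 in \<open>auto simp: A_def B_def\<close>)
      qed
    qed
    then show ?thesis by blast
  next
    assume sAB: "fst A = fst B"
    have sC: "fst C = fst A" using T_fst[OF g ne(1) sAB AB(2) AB(3)] .
    have "\<forall>x\<in>Kmp_V d n. fst (f x) = fst A"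
    proof
      fix x assume "x \<in> Kmp_V d n"
      then obtain i j where x: "x = (i,j)" "i<d" "j<n i" using part by blast
      consider "i = 0" | "i = 1" | "i \<noteq> 0 \<and> i \<noteq> 1" by blast
      then show "fst (f x) = fst A"
      proof cases
        case 1
        have "fst (f x) = fst B"
          by (rule T_fst[OF g ne(3)]) (use sAB sC adj[of i j 1 0] adj[of i j 2 0] x n0 dd 1 in \<open>auto simp: B_def C_def\<close>)
        then show ?thesis using sAB by simp
      next
        case 2
        show ?thesis
          by (rule T_fst[OF g ne(2)]) (use sAB sC adj[of i j 0 0] adj[of i j 2 0] x n0 dd 2 in \<open>auto simp: A_def C_def\<close>)
      next
        case 3
        show ?thesis
          by (rule T_fst[OF g ne(1)]) (use sAB sC adj[of i j 0 0] adj[of i j 1 0] x n0 dd 3 in \<open>auto simp: A_def B_def\<close>)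
      qed
    qed
    then show ?thesis by blast
  qed
qed



lemma bip_case:
  assumes g: "graph V1 E1" "graph V2 E2"
    and d: "d = 2" and ik: "i < 2" "k < 2" "i \<noteq> k"
    and ni: "n i \<ge> 2" and nk: "n k \<ge> 3"
    and inj: "inj_on f (Kmp_V d n)"
    and e: "\<forall>x\<in>Kmp_V d n. \<forall>y\<in>Kmp_V d n. Kmp_E d n x y \<longrightarrow> cart_E V1 E1 V2 E2 (f x) (f y)"
  shows "(\<exists>v. \<forall>x\<in>Kmp_V d n. snd (f x) = v) \<or> (\<exists>u. \<forall>x\<in>Kmp_V d n. fst (f x) = u)"
proof -
  have adj: "\<And>i j i' j'. i<d \<Longrightarrow> j<n i \<Longrightarrow> i'<d \<Longrightarrow> j'<n i' \<Longrightarrow> i\<noteq>i' \<Longrightarrow>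
     cart_E V1 E1 V2 E2 (f(i,j)) (f(i',j'))" using emb_adj[OF e] by blast
  have injf: "\<And>i j i' j'. i<d \<Longrightarrow> j<n i \<Longrightarrow> i'<d \<Longrightarrow> j'<n i' \<Longrightarrow> f(i,j) = f(i',j') \<Longrightarrow> i = i' \<and> j = j'"
    using emb_inj[OF inj] by blast
  define P Q where "P = f(i,0)" and "Q = f(i,1)"
  have PQ: "P \<noteq> Q" using injf[of i 0 i 1] ik ni d unfolding P_def Q_def by auto
  have RP: "cart_E V1 E1 V2 E2 (f(k,j)) P \<and> cart_E V1 E1 V2 E2 (f(k,j)) Q" if "j < n k" for j
    using adj[of k j i 0] adj[of k j i 1] that ik ni d unfolding P_def Q_def by auto
  have Rne: "f(k,0) \<noteq> f(k,1)" "f(k,0) \<noteq> f(k,2)" "f(k,1) \<noteq> f(k,2)"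
    using injf[of k 0 k 1] injf[of k 0 k 2] injf[of k 1 k 2] ik nk d by auto
  have part: "\<And>x. x \<in> Kmp_V d n \<Longrightarrow> \<exists>j. (x = (i,j) \<and> j < n i) \<or> (x = (k,j) \<and> j < n k)"
    using ik d by (auto simp: Kmp_V_def) (metis less_2_cases)
  have "snd P = snd Q \<or> fst P = fst Q"
  proof (rule ccontr)
    assume c: "\<not> (snd P = snd Q \<or> fst P = fst Q)"
    have "\<And>j. j < n k \<Longrightarrow> f(k,j) = (fst P, snd Q) \<or> f(k,j) = (fst Q, snd P)"
      using D_lem[OF g] c RP by blast
    then have "f(k,0) \<in> {(fst P, snd Q), (fst Q, snd P)}" "f(k,1) \<in> {(fst P, snd Q), (fst Q, snd P)}"
       "f(k,2) \<in> {(fst P, snd Q), (fst Q, snd P)}" using nk by auto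
    then show False using Rne by auto
  qed
  then show ?thesis
  proof
    assume s: "snd P = snd Q"
    have Y: "\<And>j. j < n k \<Longrightarrow> snd (f(k,j)) = snd P" using T_snd[OF g PQ s] RP by blast
    have Y2: "cart_E V1 E1 V2 E2 (f(i,j)) (f(k,0)) \<and> cart_E V1 E1 V2 E2 (f(i,j)) (f(k,1))" if "j < n i" for j
      using adj[of i j k 0] adj[of i j k 1] that ik nk d by auto
    have "\<forall>x\<in>Kmp_V d n. snd (f x) = snd P"
    proof
      fix x assume "x \<in> Kmp_V d n"
      then obtain j where "(x = (i,j) \<and> j < n i) \<or> (x = (k,j) \<and> j < n k)" using part by blast
      then show "snd (f x) = snd P"
      proof
        assume "x = (i,j) \<and> j < n i"
        then show ?thesis using T_snd[OF g Rne(1), of "f(i,j)"] Y[of 0] Y[of 1] Y2[of j] nk by auto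
      qed (use Y in auto)
    qed
    then show ?thesis by blast
  next
    assume s: "fst P = fst Q"
    have Y: "\<And>j. j < n k \<Longrightarrow> fst (f(k,j)) = fst P" using T_fst[OF g PQ s] RP by blast
    have Y2: "cart_E V1 E1 V2 E2 (f(i,j)) (f(k,0)) \<and> cart_E V1 E1 V2 E2 (f(i,j)) (f(k,1))" if "j < n i" for j
      using adj[of i j k 0] adj[of i j k 1] that ik nk d by auto
    have "\<forall>x\<in>Kmp_V d n. fst (f x) = fst P"
    proof
      fix x assume "x \<in> Kmp_V d n"
      then obtain j where "(x = (i,j) \<and> j < n i) \<or> (x = (k,j) \<and> j < n k)" using part by blast
      then show "fst (f x) = fst P"
      proof
        assume "x = (i,j) \<and> j < n i"
        then show ?thesis using T_fst[OF g Rne(1), of "f(i,j)"] Y[of 0] Y[of 1] Y2[of j] nk by auto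
      qed (use Y in auto)
    qed
    then show ?thesis by blast
  qed
qed



lemma degree_le_max:
  assumes "graph V E" "u \<in> V"
  shows "degree V E u \<le> max_degree V E"
  unfolding max_degree_def using graphD(1)[OF assms(1)] assms(2) by (simp add: Max_ge)

lemma max_attained:
  assumes "graph V E" "V \<noteq> {}"
  obtains u where "u \<in> V" "degree V E u = max_degree V E"
proof -
  have "max_degree V E \<in> degree V E ` V"
    unfolding max_degree_def using graphD(1)[OF assms(1)] assms(2) by (simp add: Max_in)
  then obtain u where "u \<in> V" "max_degree V E = degree V E u" by blast
  with that show ?thesis by simp
qed

lemma nbr_card:
  assumes g: "graph V1 E1" "graph V2 E2" and uv: "u \<in> V1" "v \<in> V2"
  defines "N \<equiv> {x\<in>V1. E1 u x} \<times> {v} \<union> {u} \<times> {y\<in>V2. E2 v y}"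
  shows "finite N" "card N = degree V1 E1 u + degree V2 E2 v"
    "\<And>q. q \<in> N \<longleftrightarrow> cart_E V1 E1 V2 E2 (u,v) q"
proof -
  have f1: "finite {x\<in>V1. E1 u x}" "finite {y\<in>V2. E2 v y}" using graphD(1)[OF g(1)] graphD(1)[OF g(2)] by auto
  then show "finite N" unfolding N_def by auto
  have disj: "{x\<in>V1. E1 u x} \<times> {v} \<inter> {u} \<times> {y\<in>V2. E2 v y} = {}"
    using graphD(5)[OF g(1), of u] by auto
  show "card N = degree V1 E1 u + degree V2 E2 v"
    unfolding N_def degree_def using f1 disj
    by (simp add: card_Un_disjoint card_cartesian_product)
  fix q
  show "q \<in> N \<longleftrightarrow> cart_E V1 E1 V2 E2 (u,v) q"
    unfolding N_def cart_E_def using uv graphD(2,3)[OF g(1)] graphD(2,3)[OF g(2)]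
    by (cases q) auto
qed

lemma star_bound:
  assumes g: "graph V1 E1" "graph V2 E2"
    and ik: "i0 < d" "k < d" "i0 \<noteq> k" "n i0 \<ge> 1"
    and inj: "inj_on f (Kmp_V d n)" and im: "f ` Kmp_V d n \<subseteq> cart_V V1 V2"
    and e: "\<forall>x\<in>Kmp_V d n. \<forall>y\<in>Kmp_V d n. Kmp_E d n x y \<longrightarrow> cart_E V1 E1 V2 E2 (f x) (f y)"
  shows "n k \<le> max_degree V1 E1 + max_degree V2 E2"
proof -
  obtain u v where uv: "f(i0,0) = (u,v)" by (cases "f(i0,0)")
  have "(i0,0) \<in> Kmp_V d n" using ik by (auto simp: Kmp_V_def)
  then have uvin: "u \<in> V1" "v \<in> V2" using im uv by (auto simp: cart_V_def)
  define N where "N = {x\<in>V1. E1 u x} \<times> {v} \<union> {u} \<times> {y\<in>V2. E2 v y}"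
  note NN = nbr_card[OF g uvin, folded N_def]
  define L where "L = (\<lambda>j. (k,j)) ` {..<n k}"
  have LK: "L \<subseteq> Kmp_V d n" using ik by (auto simp: L_def Kmp_V_def)
  have cL: "card L = n k" unfolding L_def by (simp add: card_image inj_on_def)
  have "card (f ` L) = n k" using cL card_image[OF inj_on_subset[OF inj LK]] by simp
  moreover have "f ` L \<subseteq> N"
  proof
    fix q assume "q \<in> f ` L"
    then obtain j where j: "j < n k" "q = f(k,j)" by (auto simp: L_def)
    have "cart_E V1 E1 V2 E2 (f(i0,0)) (f(k,j))" using emb_adj[OF e, of i0 0 k j] ik j by auto
    then show "q \<in> N" using NN(3) uv j by simp
  qed
  ultimately have "n k \<le> card N" using card_mono[OF NN(1)] by metis
  also have "\<dots> \<le> max_degree V1 E1 + max_degree V2 E2"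
    using NN(2) degree_le_max[OF g(1) uvin(1)] degree_le_max[OF g(2) uvin(2)] by simp
  finally show ?thesis .
qed

lemma star_emb:
  assumes g: "graph V1 E1" "graph V2 E2" and ne: "V1 \<noteq> {}" "V2 \<noteq> {}"
    and d: "d = 2" and ik: "i0 < 2" "k < 2" "i0 \<noteq> k" "n i0 = 1"
    and s: "n k \<le> max_degree V1 E1 + max_degree V2 E2"
  shows "subgraph_iso (Kmp_V d n) (Kmp_E d n) (cart_V V1 V2) (cart_E V1 E1 V2 E2)"
proof -
  obtain u where u: "u \<in> V1" "degree V1 E1 u = max_degree V1 E1" using max_attained[OF g(1) ne(1)] by blast
  obtain v where v: "v \<in> V2" "degree V2 E2 v = max_degree V2 E2" using max_attained[OF g(2) ne(2)] by blast
  define N where "N = {x\<in>V1. E1 u x} \<times> {v} \<union> {u} \<times> {y\<in>V2. E2 v y}"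
  note NN = nbr_card[OF g u(1) v(1), folded N_def]
  have "card {..<n k} \<le> card N" using NN(2) u v s by simp
  then obtain h where h: "h ` {..<n k} \<subseteq> N" "inj_on h {..<n k}"
    using card_le_inj[OF _ NN(1)] by blast
  have hE: "cart_E V1 E1 V2 E2 (u,v) (h j)" "cart_E V1 E1 V2 E2 (h j) (u,v)" if "j < n k" for j
    using h(1) that NN(3) cartE_sym[OF g] by blast+
  have uvN: "(u,v) \<notin> N" using NN(3) graphD(5)[OF g(1)] graphD(5)[OF g(2)] unfolding cart_E_def by auto
  have NV: "N \<subseteq> V1 \<times> V2" using NN(3) unfolding cart_E_def by auto
  have part: "x \<in> Kmp_V d n \<Longrightarrow> (x = (i0,0)) \<or> (\<exists>j. x = (k,j) \<and> j < n k)" for x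
  proof -
    have ab: "a < 2 \<Longrightarrow> a = i0 \<or> a = k" for a :: nat using ik by arith
    assume "x \<in> Kmp_V d n"
    then obtain a b where x: "x = (a,b)" "a < 2" "b < n a" using d by (auto simp: Kmp_V_def)
    from ab[OF x(2)] show ?thesis using x ik by auto
  qed
  define f where "f = (\<lambda>(i::nat,j::nat). if i = i0 then (u,v) else h j)"
  have fk: "f (k,j) = h j" for j using ik by (simp add: f_def)
  have f0: "f (i0,j) = (u,v)" for j by (simp add: f_def)
  show ?thesis unfolding subgraph_iso_def
  proof (intro exI[of _ f] conjI)
    show "inj_on f (Kmp_V d n)"
    proof (rule inj_onI)
      fix x y assume xy: "x \<in> Kmp_V d n" "y \<in> Kmp_V d n" "f x = f y"
      from part[OF xy(1)] part[OF xy(2)] show "x = y"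
      proof (elim disjE exE conjE)
        fix j j' assume "x = (k,j)" "j < n k" "y = (k,j')" "j' < n k"
        then show "x = y" using xy(3) h(2) fk unfolding inj_on_def by auto
      next
        fix j assume "x = (i0,0)" "y = (k,j)" "j < n k"
        then show "x = y" using xy(3) f0 fk h(1) uvN by auto
      next
        fix j assume "y = (i0,0)" "x = (k,j)" "j < n k"
        then show "x = y" using xy(3) f0 fk h(1) uvN by auto
      qed simp
    qed
    show "f ` Kmp_V d n \<subseteq> cart_V V1 V2"
    proof
      fix q assume "q \<in> f ` Kmp_V d n"
      then obtain x where x: "x \<in> Kmp_V d n" "q = f x" by blast
      from part[OF x(1)] show "q \<in> cart_V V1 V2"
        using x(2) f0 fk h(1) NV u v by (auto simp: cart_V_def)
    qed
    show "\<forall>x\<in>Kmp_V d n. \<forall>y\<in>Kmp_V d n. Kmp_E d n x y \<longrightarrow> cart_E V1 E1 V2 E2 (f x) (f y)"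
    proof (intro ballI impI)
      fix x y assume xy: "x \<in> Kmp_V d n" "y \<in> Kmp_V d n" "Kmp_E d n x y"
      from part[OF xy(1)] part[OF xy(2)] xy(3) show "cart_E V1 E1 V2 E2 (f x) (f y)"
        using f0 fk hE ik by (auto simp: Kmp_E_def)
    qed
  qed
qed

lemma sq_emb:
  assumes g: "graph V1 E1" "graph V2 E2"
    and d: "d = 2" and n: "n 0 = 2" "n 1 = 2" and h: "has_edge V1 E1" "has_edge V2 E2"
  shows "subgraph_iso (Kmp_V d n) (Kmp_E d n) (cart_V V1 V2) (cart_E V1 E1 V2 E2)"
proof -
  obtain u1 u2 where u: "u1 \<in> V1" "u2 \<in> V1" "E1 u1 u2" using h(1) unfolding has_edge_def by blast
  obtain v1 v2 where v: "v1 \<in> V2" "v2 \<in> V2" "E2 v1 v2" using h(2) unfolding has_edge_def by blast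
  have uu: "u1 \<noteq> u2" "E1 u2 u1" using u graphD(4,5)[OF g(1)] by metis+
  have vv: "v1 \<noteq> v2" "E2 v2 v1" using v graphD(4,5)[OF g(2)] by metis+
  have KV: "Kmp_V d n = {(0,0),(0,1),(1,0),(1,1)}"
  proof -
    have l2: "i < 2 \<longleftrightarrow> i = 0 \<or> i = 1" for i :: nat by auto
    show ?thesis using d n by (auto simp: Kmp_V_def l2)
  qed
  define f where "f = (\<lambda>(i::nat,j::nat). if i = 0 then (if j = 0 then (u1,v1) else (u2,v2))
      else (if j = 0 then (u1,v2) else (u2,v1)))"
  show ?thesis unfolding subgraph_iso_def
  proof (intro exI[of _ f] conjI)
    show "inj_on f (Kmp_V d n)" unfolding KV using uu vv by (auto simp: f_def inj_on_def)
    show "f ` Kmp_V d n \<subseteq> cart_V V1 V2" unfolding KV using u v by (auto simp: f_def cart_V_def)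
    show "\<forall>x\<in>Kmp_V d n. \<forall>y\<in>Kmp_V d n. Kmp_E d n x y \<longrightarrow> cart_E V1 E1 V2 E2 (f x) (f y)"
      unfolding KV using u v uu vv by (auto simp: f_def cart_E_def Kmp_E_def)
  qed
qed

lemma lift1:
  assumes "subgraph_iso VH EH V1 E1" "v \<in> V2"
  shows "subgraph_iso VH EH (cart_V V1 V2) (cart_E V1 E1 V2 E2)"
proof -
  obtain g where g: "inj_on g VH" "g ` VH \<subseteq> V1" "\<forall>x\<in>VH. \<forall>y\<in>VH. EH x y \<longrightarrow> E1 (g x) (g y)"
    using assms(1) unfolding subgraph_iso_def by blast
  show ?thesis unfolding subgraph_iso_def
    apply (rule exI[of _ "\<lambda>x. (g x, v)"])
    using g assms(2) by (auto simp: inj_on_def cart_V_def cart_E_def)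
qed

lemma lift2:
  assumes "subgraph_iso VH EH V2 E2" "u \<in> V1"
  shows "subgraph_iso VH EH (cart_V V1 V2) (cart_E V1 E1 V2 E2)"
proof -
  obtain g where g: "inj_on g VH" "g ` VH \<subseteq> V2" "\<forall>x\<in>VH. \<forall>y\<in>VH. EH x y \<longrightarrow> E2 (g x) (g y)"
    using assms(1) unfolding subgraph_iso_def by blast
  show ?thesis unfolding subgraph_iso_def
    apply (rule exI[of _ "\<lambda>x. (u, g x)"])
    using g assms(2) by (auto simp: inj_on_def cart_V_def cart_E_def)
qed



theorem mainTheorem1:
  fixes d :: nat and n :: "nat \<Rightarrow> nat"
    and V1 :: "'a set" and E1 :: "'a \<Rightarrow> 'a \<Rightarrow> bool"
    and V2 :: "'b set" and E2 :: "'b \<Rightarrow> 'b \<Rightarrow> bool"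
  assumes "d \<ge> 2" and "\<forall>i<d. n i \<ge> 1"
    and "graph V1 E1" and "graph V2 E2" and "V1 \<noteq> {}" and "V2 \<noteq> {}"
  shows "subgraph_iso (Kmp_V d n) (Kmp_E d n) (cart_V V1 V2) (cart_E V1 E1 V2 E2)
    \<longleftrightarrow>
      (subgraph_iso (Kmp_V d n) (Kmp_E d n) V1 E1 \<or> subgraph_iso (Kmp_V d n) (Kmp_E d n) V2 E2)
    \<or> (d = 2 \<and> n 0 = 2 \<and> n 1 = 2 \<and> has_edge V1 E1 \<and> has_edge V2 E2)
    \<or> (d = 2 \<and> (\<exists>s::nat. s \<ge> 1 \<and> {n 0, n 1} = {1, s}
          \<and> max_degree V1 E1 + max_degree V2 E2 \<ge> s))"
proof (rule iffI)
  note g = assms(3,4)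
  have n01: "n 0 \<ge> 1" "n 1 \<ge> 1" using assms(1) assms(2)[rule_format, of 0] assms(2)[rule_format, of 1] by auto
  assume "subgraph_iso (Kmp_V d n) (Kmp_E d n) (cart_V V1 V2) (cart_E V1 E1 V2 E2)"
  then obtain f where f: "inj_on f (Kmp_V d n)" "f ` Kmp_V d n \<subseteq> cart_V V1 V2"
    "\<forall>x\<in>Kmp_V d n. \<forall>y\<in>Kmp_V d n. Kmp_E d n x y \<longrightarrow> cart_E V1 E1 V2 E2 (f x) (f y)"
    unfolding subgraph_iso_def by blast
  have fib: "(\<exists>v. \<forall>x\<in>Kmp_V d n. snd (f x) = v) \<or> (\<exists>u. \<forall>x\<in>Kmp_V d n. fst (f x) = u) \<Longrightarrow>
    subgraph_iso (Kmp_V d n) (Kmp_E d n) V1 E1 \<or> subgraph_iso (Kmp_V d n) (Kmp_E d n) V2 E2"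
    using fiber_snd[OF g f] fiber_fst[OF g f] by blast
  show "(subgraph_iso (Kmp_V d n) (Kmp_E d n) V1 E1 \<or> subgraph_iso (Kmp_V d n) (Kmp_E d n) V2 E2)
    \<or> (d = 2 \<and> n 0 = 2 \<and> n 1 = 2 \<and> has_edge V1 E1 \<and> has_edge V2 E2)
    \<or> (d = 2 \<and> (\<exists>s::nat. s \<ge> 1 \<and> {n 0, n 1} = {1, s}
          \<and> max_degree V1 E1 + max_degree V2 E2 \<ge> s))"
  proof (cases "d \<ge> 3")
    case True
    show ?thesis using fib three_parts[OF g True assms(2) f(1) f(3)] by blast
  next
    case False
    then have d2: "d = 2" using assms(1) by simp
    consider "n 0 = 1" | "n 1 = 1" | "n 0 = 2 \<and> n 1 = 2" | "n 0 \<ge> 2 \<and> n 1 \<ge> 3" | "n 0 \<ge> 3 \<and> n 1 \<ge> 2"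
      using n01 by linarith
    then show ?thesis
    proof cases
      case 1
      have "n 1 \<le> max_degree V1 E1 + max_degree V2 E2"
        using star_bound[OF g _ _ _ _ f(1,2,3), of 0 1] d2 1 by simp
      then show ?thesis using d2 1 n01 by auto
    next
      case 2
      have "n 0 \<le> max_degree V1 E1 + max_degree V2 E2"
        using star_bound[OF g _ _ _ _ f(1,2,3), of 1 0] d2 2 by simp
      then show ?thesis using d2 2 n01 by (auto simp: insert_commute)
    next
      case 3
      show ?thesis
      proof (cases "has_edge V1 E1 \<and> has_edge V2 E2")
        case True then show ?thesis using 3 d2 by blast
      next
        case False
        then show ?thesis
          using noedge2[OF g _ assms(1) n01 f(3)] noedge1[OF g _ assms(1) n01 f(3)] fib by blast
      qed
    next
      case 4
      show ?thesis using fib bip_case[OF g d2 _ _ _ _ _ f(1) f(3), of 0 1] 4 by auto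
    next
      case 5
      show ?thesis using fib bip_case[OF g d2 _ _ _ _ _ f(1) f(3), of 1 0] 5 by auto
    qed
  qed
next
  note g = assms(3,4)
  obtain u0 where u0: "u0 \<in> V1" using assms(5) by blast
  obtain v0 where v0: "v0 \<in> V2" using assms(6) by blast
  assume "(subgraph_iso (Kmp_V d n) (Kmp_E d n) V1 E1 \<or> subgraph_iso (Kmp_V d n) (Kmp_E d n) V2 E2)
    \<or> (d = 2 \<and> n 0 = 2 \<and> n 1 = 2 \<and> has_edge V1 E1 \<and> has_edge V2 E2)
    \<or> (d = 2 \<and> (\<exists>s::nat. s \<ge> 1 \<and> {n 0, n 1} = {1, s}
          \<and> max_degree V1 E1 + max_degree V2 E2 \<ge> s))"
  then show "subgraph_iso (Kmp_V d n) (Kmp_E d n) (cart_V V1 V2) (cart_E V1 E1 V2 E2)"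
  proof (elim disjE conjE exE)
    assume "subgraph_iso (Kmp_V d n) (Kmp_E d n) V1 E1"
    then show ?thesis by (rule lift1[OF _ v0])
  next
    assume "subgraph_iso (Kmp_V d n) (Kmp_E d n) V2 E2"
    then show ?thesis by (rule lift2[OF _ u0])
  next
    assume a: "d = 2" "n 0 = 2" "n 1 = 2" "has_edge V1 E1" "has_edge V2 E2"
    show ?thesis by (rule sq_emb[OF g a])
  next
    fix s assume d2: "d = 2" and s: "1 \<le> s" "{n 0, n 1} = {1, s}" "s \<le> max_degree V1 E1 + max_degree V2 E2"
    from s(2) have "(n 0 = 1 \<and> n 1 = s) \<or> (n 0 = s \<and> n 1 = 1)" by (simp add: doubleton_eq_iff)
    then show ?thesis
    proof
      assume "n 0 = 1 \<and> n 1 = s"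
      then show ?thesis using star_emb[OF g assms(5,6) d2, of 0 1] s by simp
    next
      assume "n 0 = s \<and> n 1 = 1"
      then show ?thesis using star_emb[OF g assms(5,6) d2, of 1 0] s by simp
    qed
  qed
qed

end
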